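(* Let $p\ge 2$, let $F$ be a distribution on $\mathbb{R}^p$, let $X\sim F$, let $X_1,X_2,\ldots$ be independent random vectors with distribution $F$, let $t\in\mathbb{R}^p$, and let $(t_n)_{n\in\mathbb{N}}$ be a sequence of random $p$-vectors (defined on the same probability space as the $X_i$). Suppose that $E|t_n-t|^4=O(n^{-2})$ as $n\to\infty$ and $E|X-t|^{-3/2}<\infty$. Let $n^*=\#\{1\le i\le n : X_i\neq t_n\}$. Then $(n-n^* )/\sqrt{n}\to 0$ in probability as $n\to\infty$.
   Context: $|\cdot|$ denotes the Euclidean norm on $\mathbb{R}^p$. *)

theory Defs
  imports "HOL-Probability.Probability"
begin

definition conv_in_prob :: "'a measure \<Rightarrow> (nat \<Rightarrow> 'a \<Rightarrow> real) \<Rightarrow> real \<Rightarrow> bool" where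
  "conv_in_prob M Y c \<longleftrightarrow>
     (\<forall>\<epsilon>>0. (\<lambda>n. measure M {\<omega> \<in> space M. \<bar>Y n \<omega> - c\<bar> > \<epsilon>}) \<longlonglongrightarrow> 0)"

end

theory Submission
  imports Defs "HOL-Real_Asymp.Real_Asymp"
begin

lemma markov_real:
  assumes "prob_space M" "A \<in> sets M" "a > 0"
    and "\<And>\<omega>. \<omega> \<in> A \<Longrightarrow> ennreal a \<le> f \<omega>"
  shows "ennreal (measure M A * a) \<le> (\<integral>\<^sup>+\<omega>. f \<omega> \<partial>M)"
proof -
  interpret prob_space M by fact
  have "ennreal (measure M A * a) = ennreal a * emeasure M A"
    using assms by (simp add: emeasure_eq_measure ennreal_mult' mult.commute)
  also have "\<dots> = (\<integral>\<^sup>+\<omega>. ennreal a * indicator A \<omega> \<partial>M)"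
    using assms by (simp add: nn_integral_cmult_indicator)
  also have "\<dots> \<le> (\<integral>\<^sup>+\<omega>. f \<omega> \<partial>M)"
    by (intro nn_integral_mono) (auto simp: indicator_def assms)
  finally show ?thesis .
qed

lemma sum_ind_card:
  assumes "finite I"
  shows "(\<Sum>i\<in>I. indicator (P i) \<omega> :: ennreal) = ennreal (real (card {i\<in>I. \<omega> \<in> P i}))"
proof -
  have "card {i\<in>I. \<omega> \<in> P i} = (\<Sum>i\<in>I. if \<omega> \<in> P i then 1 else 0)"
    using assms by (simp add: sum.inter_filter[symmetric])
  then have "ennreal (real (card {i\<in>I. \<omega> \<in> P i})) = of_nat (\<Sum>i\<in>I. if \<omega> \<in> P i then 1 else 0)"
    by (simp add: ennreal_of_nat_eq_real_of_nat)
  also have "\<dots> = (\<Sum>i\<in>I. indicator (P i) \<omega>)"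
    by (auto simp: of_nat_sum indicator_def intro!: sum.cong)
  finally show ?thesis by simp
qed

lemma card_split: "finite A \<Longrightarrow> real (card A) - real (card {i\<in>A. P i}) = real (card {i\<in>A. \<not> P i})"
proof -
  assume "finite A"
  moreover have "A = {i\<in>A. P i} \<union> {i\<in>A. \<not> P i}" by auto
  ultimately have "card A = card {i\<in>A. P i} + card {i\<in>A. \<not> P i}"
    by (metis (no_types, lifting) card_Un_disjoint disjoint_iff finite_Un mem_Collect_eq)
  then show ?thesis by simp
qed

lemma lim1: "(\<lambda>n. 1 / sqrt (real n)) \<longlonglongrightarrow> 0" by real_asymp
lemma lim2: "(\<lambda>n. real n powr (-1/16)) \<longlonglongrightarrow> 0" by real_asymp

lemma pw1: "n > 0 \<Longrightarrow> (real n)^2 * (real n powr (-3/8))^4 = sqrt (real n)"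
proof -
  assume n: "n > 0"
  have "(real n)^2 * (real n powr (-3/8))^4 = real n powr 2 * real n powr (4 * (-3/8))"
    using n by (simp add: powr_power powr_realpow)
  also have "\<dots> = real n powr (2 + 4 * (-3/8))" by (rule powr_add[symmetric])
  also have "\<dots> = real n powr (1/2)" by simp
  finally show ?thesis by (simp add: powr_half_sqrt)
qed
lemma pw2: "n > 0 \<Longrightarrow> real n * (real n powr (-3/8)) powr (3/2) / sqrt (real n) = real n powr (-1/16)"
proof -
  assume n: "n > 0"
  have "real n * (real n powr (-3/8)) powr (3/2) / sqrt (real n) = real n powr 1 * real n powr (-3/8*(3/2)) / real n powr (1/2)"
    using n by (simp add: powr_powr powr_half_sqrt)
  also have "\<dots> = real n powr (1 + (-3/8*(3/2)) - 1/2)" by (simp only: powr_add[symmetric] powr_diff[symmetric])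
  also have "\<dots> = real n powr (-1/16)" by simp
  finally show ?thesis .
qed

theorem lemma1:
  fixes M :: "'w measure" and F :: "(real ^ 'p) measure"
    and X :: "nat \<Rightarrow> 'w \<Rightarrow> real ^ 'p" and T :: "nat \<Rightarrow> 'w \<Rightarrow> real ^ 'p"
    and t :: "real ^ 'p"
  assumes "prob_space M"
    and "CARD('p) \<ge> 2"
    and "\<And>i. i \<ge> 1 \<Longrightarrow> X i \<in> borel_measurable M"
    and "prob_space.indep_vars M (\<lambda>_. borel) X {1..}"
    and "\<And>i. i \<ge> 1 \<Longrightarrow> distr M borel (X i) = F"
    and "\<And>n. T n \<in> borel_measurable M"
    and "\<exists>C. \<forall>\<^sub>F n in sequentially.
           (\<integral>\<^sup>+ \<omega>. ennreal (norm (T n \<omega> - t) ^ 4) \<partial>M) \<le> ennreal (C / (real n) ^ 2)"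
    and "(\<integral>\<^sup>+ x. (if x = t then \<infinity> else ennreal (norm (x - t) powr (-3/2))) \<partial>F) < \<infinity>"
  shows "conv_in_prob M
           (\<lambda>n \<omega>. (real n - real (card {i \<in> {1..n}. X i \<omega> \<noteq> T n \<omega>})) / sqrt (real n)) 0"
proof -
  interpret prob_space M by fact
  note Xm = assms(3) and Fd = assms(5) and Tm = assms(6)
  obtain C0 where C0: "\<forall>\<^sub>F n in sequentially.
           (\<integral>\<^sup>+ \<omega>. ennreal (norm (T n \<omega> - t) ^ 4) \<partial>M) \<le> ennreal (C0 / (real n) ^ 2)"
    using assms(7) by blast
  define C where "C = max C0 0"
  have C0le: "C \<ge> 0" by (simp add: C_def)
  have Cev: "\<forall>\<^sub>F n in sequentially.
           (\<integral>\<^sup>+ \<omega>. ennreal (norm (T n \<omega> - t) ^ 4) \<partial>M) \<le> ennreal (C / (real n) ^ 2)"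
    using C0 by eventually_elim (erule order_trans, rule ennreal_leI, simp add: C_def divide_right_mono)
  have F1: "F = distr M borel (X 1)" using Fd[of 1] by simp
  have Fprob: "prob_space F" unfolding F1
    by (rule prob_space_distr) (use Xm[of 1] in simp)
  have sF: "sets F = sets borel" unfolding F1 by simp
  define g where "g = (\<lambda>x. (if x = t then \<infinity> else ennreal (norm (x - t) powr (-3/2))))"
  define Ir where "Ir = enn2real (\<integral>\<^sup>+ x. g x \<partial>F)"
  have Ieq: "(\<integral>\<^sup>+ x. g x \<partial>F) = ennreal Ir"
    using assms(8) unfolding Ir_def g_def by (simp add: ennreal_enn2real less_top)
  have Ir0: "Ir \<ge> 0" unfolding Ir_def by simp
  have hF: "measure F (cball t \<delta>) \<le> Ir * \<delta> powr (3/2)" if dpos: "\<delta> > 0" for \<delta>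
  proof -
    have "ennreal (measure F (cball t \<delta>) * \<delta> powr (-3/2)) \<le> (\<integral>\<^sup>+ x. g x \<partial>F)"
    proof (rule markov_real[OF Fprob])
      show "cball t \<delta> \<in> sets F" using sF by simp
      show "\<delta> powr (-3/2) > 0" using dpos by simp
      fix x assume x: "x \<in> cball t \<delta>"
      show "ennreal (\<delta> powr (-3/2)) \<le> g x"
      proof (cases "x = t")
        case True then show ?thesis by (simp add: g_def)
      next
        case False
        have "norm (x - t) \<le> \<delta>" using x by (simp add: dist_norm norm_minus_commute)
        moreover have "norm (x - t) > 0" using False by simp
        ultimately have "\<delta> powr (-3/2) \<le> norm (x - t) powr (-3/2)"
          by (intro powr_mono2') auto
        then show ?thesis using False by (simp add: g_def ennreal_leI)
      qed
    qed
    then have "measure F (cball t \<delta>) * \<delta> powr (-3/2) \<le> Ir"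
      using Ieq Ir0 by (simp add: ennreal_le_iff)
    then have "measure F (cball t \<delta>) * \<delta> powr (-3/2) * \<delta> powr (3/2) \<le> Ir * \<delta> powr (3/2)"
      by (intro mult_right_mono) auto
    moreover have "\<delta> powr (-3/2) * \<delta> powr (3/2) = 1"
      using dpos by (simp add: powr_add[symmetric])
    ultimately show ?thesis by (simp add: mult.assoc)
  qed
  show ?thesis unfolding conv_in_prob_def
  proof (intro allI impI)
    fix \<epsilon> :: real assume eps: "\<epsilon> > 0"
    let ?S = "\<lambda>n. {\<omega> \<in> space M. \<bar>(\<lambda>n \<omega>. (real n - real (card {i \<in> {1..n}. X i \<omega> \<noteq> T n \<omega>})) / sqrt (real n)) n \<omega> - 0\<bar> > \<epsilon>}"
    let ?b = "\<lambda>n. C * (1 / sqrt (real n)) + Ir / \<epsilon> * real n powr (-1/16)"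
    have blim: "?b \<longlonglongrightarrow> 0"
      using tendsto_add[OF tendsto_mult_right_zero[OF lim1, of C] tendsto_mult_right_zero[OF lim2, of "Ir/\<epsilon>"]]
      by simp
    have ev: "\<forall>\<^sub>F n in sequentially. measure M (?S n) \<le> ?b n"
      using Cev eventually_ge_at_top[of 1]
    proof eventually_elim
      case (elim n)
      have n0: "n > 0" using elim by simp
      define \<delta> where "\<delta> = real n powr (-3/8)"
      have dpos: "\<delta> > 0" using n0 by (simp add: \<delta>_def)
      define A where "A = {\<omega> \<in> space M. \<delta> < norm (T n \<omega> - t)}"
      have Am: "A \<in> sets M" unfolding A_def using Tm[of n] by measurable
      have "ennreal (measure M A * \<delta>^4) \<le> (\<integral>\<^sup>+ \<omega>. ennreal (norm (T n \<omega> - t) ^ 4) \<partial>M)"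
      proof (rule markov_real[OF assms(1) Am])
        show "\<delta>^4 > 0" using dpos by simp
        fix \<omega> assume "\<omega> \<in> A"
        then have "\<delta> < norm (T n \<omega> - t)" by (simp add: A_def)
        then have "\<delta>^4 \<le> norm (T n \<omega> - t) ^ 4" using dpos by (intro power_mono) auto
        then show "ennreal (\<delta>^4) \<le> ennreal (norm (T n \<omega> - t) ^ 4)" by (rule ennreal_leI)
      qed
      also have "\<dots> \<le> ennreal (C / (real n)^2)" using elim by simp
      finally have "measure M A * \<delta>^4 \<le> C / (real n)^2"
        using C0le by (simp add: ennreal_le_iff)
      then have "measure M A * \<delta>^4 * (real n)^2 \<le> C"
        using n0 by (simp add: field_simps)
      then have "measure M A * sqrt (real n) \<le> C"
      proof -
        have e: "sqrt (real n) = \<delta>^4 * (real n)^2"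
          using pw1[OF n0] by (simp add: \<delta>_def mult.commute)
        show ?thesis using \<open>measure M A * \<delta>^4 * (real n)^2 \<le> C\<close> unfolding e by (simp add: mult.assoc)
      qed
      then have mA: "measure M A \<le> C * (1 / sqrt (real n))"
        using n0 by (simp add: field_simps)
      define Cs where "Cs = cball t \<delta>"
      have Csb: "Cs \<in> sets borel" by (simp add: Cs_def)
      define f where "f = (\<lambda>\<omega>. \<Sum>i\<in>{1..n}. indicator (X i -` Cs \<inter> space M) \<omega> :: ennreal)"
      have pre_m: "X i -` Cs \<inter> space M \<in> sets M" if "i \<in> {1..n}" for i
        using Xm[of i] that Csb by (auto intro: measurable_sets)
      have fm: "f \<in> borel_measurable M" unfolding f_def
        using pre_m by (intro borel_measurable_sum) auto
      define B where "B = {\<omega> \<in> space M. ennreal (\<epsilon> * sqrt (real n)) \<le> f \<omega>}"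
      have Bm: "B \<in> sets M" unfolding B_def using fm by measurable
      have "(\<integral>\<^sup>+\<omega>. f \<omega> \<partial>M) = (\<Sum>i\<in>{1..n}. emeasure M (X i -` Cs \<inter> space M))"
        unfolding f_def using pre_m
        by (subst nn_integral_sum) (auto intro!: sum.cong borel_measurable_indicator)
      also have "\<dots> = (\<Sum>i\<in>{1..n}. emeasure F Cs)"
      proof (rule sum.cong)
        fix i assume i: "i \<in> {1..n}"
        then have "F = distr M borel (X i)" using Fd[of i] by simp
        then show "emeasure M (X i -` Cs \<inter> space M) = emeasure F Cs"
          using emeasure_distr[OF Xm[of i] Csb] i by simp
      qed simp
      also have "\<dots> = ennreal (real n * measure F Cs)"
        using finite_measure.emeasure_eq_measure[OF prob_space.finite_measure[OF Fprob]]
        by (simp add: ennreal_mult' ennreal_of_nat_eq_real_of_nat)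
      finally have intf: "(\<integral>\<^sup>+\<omega>. f \<omega> \<partial>M) = ennreal (real n * measure F Cs)" .
      have "ennreal (measure M B * (\<epsilon> * sqrt (real n))) \<le> (\<integral>\<^sup>+\<omega>. f \<omega> \<partial>M)"
        by (rule markov_real[OF assms(1) Bm]) (use eps n0 in \<open>auto simp: B_def\<close>)
      then have "measure M B * (\<epsilon> * sqrt (real n)) \<le> real n * measure F Cs"
        unfolding intf by (simp add: ennreal_le_iff)
      also have "\<dots> \<le> real n * (Ir * \<delta> powr (3/2))"
        using hF[OF dpos] by (intro mult_left_mono) (auto simp: Cs_def)
      finally have "measure M B \<le> Ir / \<epsilon> * (real n * \<delta> powr (3/2) / sqrt (real n))"
        using eps n0 by (simp add: field_simps)
      then have mB: "measure M B \<le> Ir / \<epsilon> * real n powr (-1/16)"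
        using pw2[OF n0] unfolding \<delta>_def by (simp only:)
      have sub: "?S n \<subseteq> A \<union> B"
      proof
        fix \<omega> assume w: "\<omega> \<in> ?S n"
        show "\<omega> \<in> A \<union> B"
        proof (cases "\<omega> \<in> A")
          case False
          have wsp: "\<omega> \<in> space M" using w by simp
          with False have Tle: "norm (T n \<omega> - t) \<le> \<delta>" by (simp add: A_def)
          have eq: "real n - real (card {i \<in> {1..n}. X i \<omega> \<noteq> T n \<omega>}) = real (card {i \<in> {1..n}. X i \<omega> = T n \<omega>})"
            using card_split[of "{1..n}" "\<lambda>i. X i \<omega> \<noteq> T n \<omega>"] by simp
          have "\<epsilon> < real (card {i \<in> {1..n}. X i \<omega> = T n \<omega>}) / sqrt (real n)"
            using w eq by simp
          then have "\<epsilon> * sqrt (real n) < real (card {i \<in> {1..n}. X i \<omega> = T n \<omega>})"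
            using n0 by (simp add: field_simps)
          also have "\<dots> \<le> real (card {i\<in>{1..n}. \<omega> \<in> X i -` Cs \<inter> space M})"
            using Tle wsp by (intro of_nat_mono card_mono)
              (auto simp: Cs_def dist_norm norm_minus_commute)
          finally have "ennreal (\<epsilon> * sqrt (real n)) \<le> f \<omega>"
            unfolding f_def sum_ind_card[OF finite_atLeastAtMost] by (intro ennreal_leI) simp
          then show ?thesis using wsp by (simp add: B_def)
        qed simp
      qed
      have "measure M (?S n) \<le> measure M (A \<union> B)"
        using sub Am Bm by (intro finite_measure_mono) auto
      also have "\<dots> \<le> measure M A + measure M B" using Am Bm by (rule measure_Un_le)
      finally show ?case using mA mB by simp
    qed
    show "(\<lambda>n. measure M (?S n)) \<longlonglongrightarrow> 0"
      by (rule tendsto_sandwich[OF _ ev tendsto_const blim]) simp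
  qed
qed

end
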